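(* Let $r\ge5$. There is a constant $C$ depending only on $r$ such that for every $K_r$-tree $T$ and every $S\subseteq V(T)$, and for any run of the $(r-2)_*$-BP process on $T$ with seed set $S$, we have $|\langle S;T\rangle_*|\le C|S|$.
   Context: A graph $T$ is a $K_r$-tree if it is the union of copies $H_1,\dots,H_\vartheta$ of $K_r$ such that for each $1<i\le\vartheta$, $H_i$ shares exactly one edge with $H_1\cup\cdots\cup H_{i-1}$ (the common vertices being exactly the two endpoints of that edge). An edge of $T$ is internal if it lies in at least two of the $H_i$. The $(r-2)_*$-bootstrap percolation process on $T$ with seed set $S\subseteq V(T)$: initially the vertices of $S$ are infected; in each step, either (usual step) some uninfected vertex with at least $r-2$ infected neighbors in $T$ becomes infected; or else (special step), if no usual step is possible but for some internal edge $f$ there are two copies $H_i\ne H_j$ containing $f$ such that $H_i$ has $r-4$ infected vertices and $H_j$ has $1$ infected vertex, all these $r-3$ vertices not in $f$, then an arbitrarily chosen vertex $u\in f$ becomes infected; otherwise the process terminates. $\langle S;T\rangle_*$ is the set of eventually infected vertices. *)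

theory Defs
  imports Complex_Main
begin

text \<open>A K_r-tree is given by its list of copies H_1,...,H_theta of K_r, each copy
  represented by its vertex set (a clique on r vertices). Vertices are natural numbers
  (every finite graph is isomorphic to one on nat), so that the constant C can be
  quantified independently of any type.\<close>

definition Kr_tree :: "nat \<Rightarrow> nat set list \<Rightarrow> bool" where
  "Kr_tree r Hs \<longleftrightarrow> Hs \<noteq> [] \<and>
     (\<forall>H\<in>set Hs. finite H \<and> card H = r) \<and>
     (\<forall>i. 0 < i \<and> i < length Hs \<longrightarrow>
        (\<exists>u v. u \<noteq> v \<and> Hs ! i \<inter> (\<Union>j<i. Hs ! j) = {u, v} \<and>
               (\<exists>j<i. {u, v} \<subseteq> Hs ! j)))"

definition tverts :: "nat set list \<Rightarrow> nat set" where
  "tverts Hs = \<Union>(set Hs)"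

definition tadj :: "nat set list \<Rightarrow> nat \<Rightarrow> nat \<Rightarrow> bool" where
  "tadj Hs v w \<longleftrightarrow> v \<noteq> w \<and> (\<exists>H\<in>set Hs. v \<in> H \<and> w \<in> H)"

definition internal_edge :: "nat set list \<Rightarrow> nat set \<Rightarrow> bool" where
  "internal_edge Hs f \<longleftrightarrow> (\<exists>u v. u \<noteq> v \<and> f = {u, v}) \<and>
     (\<exists>i j. i < length Hs \<and> j < length Hs \<and> i \<noteq> j \<and> f \<subseteq> Hs ! i \<and> f \<subseteq> Hs ! j)"

definition usual_step :: "nat \<Rightarrow> nat set list \<Rightarrow> nat set \<Rightarrow> nat set \<Rightarrow> bool" where
  "usual_step r Hs I I' \<longleftrightarrow>
     (\<exists>v\<in>tverts Hs. v \<notin> I \<and> card {w. tadj Hs v w \<and> w \<in> I} \<ge> r - 2 \<and> I' = insert v I)"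

definition special_step :: "nat \<Rightarrow> nat set list \<Rightarrow> nat set \<Rightarrow> nat set \<Rightarrow> bool" where
  "special_step r Hs I I' \<longleftrightarrow>
     \<not> (\<exists>J. usual_step r Hs I J) \<and>
     (\<exists>f i j u. internal_edge Hs f \<and> i < length Hs \<and> j < length Hs \<and> i \<noteq> j \<and>
        f \<subseteq> Hs ! i \<and> f \<subseteq> Hs ! j \<and>
        card (Hs ! i \<inter> I) = r - 4 \<and> card (Hs ! j \<inter> I) = 1 \<and>
        (Hs ! i \<inter> I) \<inter> f = {} \<and> (Hs ! j \<inter> I) \<inter> f = {} \<and>
        u \<in> f \<and> I' = insert u I)"

definition bp_step :: "nat \<Rightarrow> nat set list \<Rightarrow> nat set \<Rightarrow> nat set \<Rightarrow> bool" where
  "bp_step r Hs I I' \<longleftrightarrow> usual_step r Hs I I' \<or> special_step r Hs I I'"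

definition bp_run_result :: "nat \<Rightarrow> nat set list \<Rightarrow> nat set \<Rightarrow> nat set \<Rightarrow> bool" where
  "bp_run_result r Hs S I \<longleftrightarrow> (bp_step r Hs)\<^sup>*\<^sup>* S I \<and> \<not> (\<exists>I'. bp_step r Hs I I')"

end

theory Submission
  imports Defs
begin


locale krt =
  fixes r :: nat and Hs :: "nat set list"
  assumes kt: "Kr_tree r Hs" and r5: "r \<ge> 5"
begin

abbreviation "L \<equiv> length Hs"

definition old :: "nat \<Rightarrow> nat set" where "old i = Hs ! i \<inter> (\<Union>j<i. Hs ! j)"
definition new :: "nat \<Rightarrow> nat set" where "new i = Hs ! i - old i"

lemma H_fin: "i < L \<Longrightarrow> finite (Hs!i)"
  using kt nth_mem unfolding Kr_tree_def by blast
lemma H_card: "i < L \<Longrightarrow> card (Hs!i) = r"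
  using kt nth_mem unfolding Kr_tree_def by blast

lemma old_sub: "old i \<subseteq> Hs!i" unfolding old_def by auto
lemma new_sub: "new i \<subseteq> Hs!i" unfolding new_def by auto
lemma new_old_disj: "new i \<inter> old i = {}" by (auto simp: new_def)
lemma new_un_old: "new i \<union> old i = Hs!i" using old_sub by (auto simp: new_def)
lemma old0: "old 0 = {}" by (simp add: old_def)
lemma old_pos: "0 < i \<Longrightarrow> i < L \<Longrightarrow> \<exists>u v. u \<noteq> v \<and> old i = {u,v} \<and> (\<exists>j<i. {u,v} \<subseteq> Hs!j)"
proof -
  assume a: "0 < i" "i < L"
  have "\<forall>i. 0 < i \<and> i < L \<longrightarrow>
        (\<exists>u v. u \<noteq> v \<and> Hs ! i \<inter> (\<Union>j<i. Hs ! j) = {u, v} \<and> (\<exists>j<i. {u, v} \<subseteq> Hs ! j))"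
    using kt unfolding Kr_tree_def by blast
  then show ?thesis using a unfolding old_def by blast
qed
lemma card_old: "i < L \<Longrightarrow> card (old i) = (if i = 0 then 0 else 2)"
proof (cases "i = 0")
  case True then show ?thesis by (simp add: old0)
next
  case False
  assume "i < L"
  then obtain u v where "u \<noteq> v" "old i = {u,v}" using old_pos False by blast
  then show ?thesis using False by simp
qed
lemma fin_old: "i<L \<Longrightarrow> finite (old i)" using H_fin old_sub finite_subset by blast
lemma fin_new: "i<L \<Longrightarrow> finite (new i)" using H_fin new_sub finite_subset by blast
lemma card_new: "i < L \<Longrightarrow> card (new i) = (if i = 0 then r else r - 2)"
  unfolding new_def using card_Diff_subset[OF fin_old old_sub] H_card card_old by simp

lemma inter_old: "i < j \<Longrightarrow> Hs!i \<inter> Hs!j \<subseteq> old j" unfolding old_def by auto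
lemma inter_card: assumes "i<L" "j<L" "i\<noteq>j" shows "card (Hs!i \<inter> Hs!j) \<le> 2"
proof (cases "i < j")
  case True
  then have "card (Hs!i \<inter> Hs!j) \<le> card (old j)"
    using card_mono[OF fin_old inter_old] assms by blast
  then show ?thesis using card_old assms by (simp split: if_splits)
next
  case False
  then have "j < i" using assms by simp
  then have "card (Hs!j \<inter> Hs!i) \<le> card (old i)"
    using card_mono[OF fin_old inter_old] assms by blast
  then show ?thesis using card_old assms by (simp add: Int_commute split: if_splits)
qed
lemma new_disj: assumes "i\<noteq>j" shows "new i \<inter> new j = {}"
proof -
  have "new a \<inter> new b = {}" if "a < b" for a b
    using inter_old[OF that] new_sub[of a] new_sub[of b] new_old_disj[of b] by blast
  then show ?thesis using assms by (metis Int_commute linorder_neqE_nat)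
qed

definition birth where "birth v = (LEAST i. i < L \<and> v \<in> Hs!i)"
lemma tverts_iff: "v \<in> tverts Hs \<longleftrightarrow> (\<exists>i<L. v \<in> Hs!i)"
  unfolding tverts_def by (metis Union_iff in_set_conv_nth)
lemma birth: assumes "v \<in> tverts Hs"
  shows "birth v < L" "v \<in> Hs!(birth v)" "\<And>j. j < birth v \<Longrightarrow> v \<notin> Hs!j"
proof -
  obtain i where i: "i<L \<and> v\<in>Hs!i" using assms tverts_iff by blast
  show "birth v < L" "v \<in> Hs!(birth v)" using LeastI[of "\<lambda>i. i < L \<and> v \<in> Hs!i", OF i]
    unfolding birth_def by auto
  fix j assume "j < birth v"
  then have "\<not> (j < L \<and> v \<in> Hs!j)" unfolding birth_def by (rule not_less_Least)
  then show "v \<notin> Hs!j" using \<open>j < birth v\<close> \<open>birth v < L\<close> by simp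
qed
lemma birth_le: "i<L \<Longrightarrow> v \<in> Hs!i \<Longrightarrow> birth v \<le> i"
  unfolding birth_def by (rule Least_le) simp
lemma birth_new: assumes "v \<in> tverts Hs" shows "v \<in> new (birth v)"
  using birth[OF assms] unfolding new_def old_def by auto
lemma in_old: assumes "i<L" "v \<in> Hs!i" "i \<noteq> birth v" shows "v \<in> old i" "birth v < i"
proof -
  have t: "v \<in> tverts Hs" using assms tverts_iff by blast
  show "birth v < i" using birth_le[OF assms(1,2)] assms(3) by simp
  then show "v \<in> old i" using birth[OF t] assms unfolding old_def by auto
qed
lemma new_iff: assumes "v \<in> tverts Hs" "i<L" shows "v \<in> new i \<longleftrightarrow> i = birth v"
  using birth_new[OF assms(1)] in_old[OF assms(2)] new_sub[of i] new_old_disj[of i] by auto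
lemma fin_tverts: "finite (tverts Hs)"
  using kt unfolding tverts_def Kr_tree_def by blast
lemma tverts_new: "tverts Hs = (\<Union>i<L. new i)"
proof
  show "tverts Hs \<subseteq> (\<Union>i<L. new i)"
  proof
    fix v assume "v \<in> tverts Hs"
    then show "v \<in> (\<Union>i<L. new i)" using birth(1) birth_new by blast
  qed
  show "(\<Union>i<L. new i) \<subseteq> tverts Hs" using new_sub tverts_iff by blast
qed
lemma card_sum: assumes "I \<subseteq> tverts Hs" shows "card I = (\<Sum>i<L. card (new i \<inter> I))"
proof -
  have "I = (\<Union>i<L. new i \<inter> I)" using assms tverts_new by blast
  then have "card I = card (\<Union>i<L. new i \<inter> I)" by simp
  also have "\<dots> = (\<Sum>i<L. card (new i \<inter> I))"
    by (rule card_UN_disjoint) (use fin_new new_disj in auto)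
  finally show ?thesis .
qed

end

context krt begin

definition nb :: "nat set \<Rightarrow> nat \<Rightarrow> nat set" where "nb I v = {w. tadj Hs v w \<and> w \<in> I}"

lemma nb_sub: "nb I v \<subseteq> tverts Hs"
  unfolding nb_def tadj_def tverts_def by auto
lemma nb_fin: "finite (nb I v)" using nb_sub fin_tverts finite_subset by blast
lemma nb_mono: "I \<subseteq> I' \<Longrightarrow> card (nb I v) \<le> card (nb I' v)"
  by (rule card_mono[OF nb_fin]) (auto simp: nb_def)
lemma in_nb: "i<L \<Longrightarrow> v\<in>Hs!i \<Longrightarrow> w \<in> Hs!i \<Longrightarrow> w \<in> I \<Longrightarrow> w \<noteq> v \<Longrightarrow> w \<in> nb I v"
  unfolding nb_def tadj_def using nth_mem by blast
lemma nb_elim: assumes "w \<in> nb I v" obtains i where "i<L" "v\<in>Hs!i" "w\<in>Hs!i" "w\<in>I" "w\<noteq>v"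
  using assms unfolding nb_def tadj_def by (auto simp: in_set_conv_nth)

definition J :: "nat \<Rightarrow> nat set" where "J v = {i. i<L \<and> v \<in> Hs!i \<and> i \<noteq> birth v}"
lemma J_fin: "finite (J v)" unfolding J_def by auto

lemma nb_cover: assumes v: "v \<in> tverts Hs" "v \<notin> I"
  shows "nb I v \<subseteq> (Hs!(birth v) \<inter> I) \<union> (\<Union>i\<in>J v. new i \<inter> I)"
proof
  fix w assume w: "w \<in> nb I v"
  define P where "P i \<longleftrightarrow> i<L \<and> v \<in> Hs!i \<and> w \<in> Hs!i" for i
  obtain i where "P i" using nb_elim[OF w] P_def by metis
  define i0 where "i0 = (LEAST i. P i)"
  have P0: "P i0" unfolding i0_def by (rule LeastI, fact)
  have min: "\<not> P j" if "j < i0" for j using not_less_Least[of j P] that i0_def by simp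
  have wI: "w \<in> I" "w \<noteq> v" using w unfolding nb_def tadj_def by auto
  show "w \<in> (Hs!(birth v) \<inter> I) \<union> (\<Union>i\<in>J v. new i \<inter> I)"
  proof (cases "i0 = birth v")
    case True then show ?thesis using P0 wI P_def by auto
  next
    case False
    then have iJ: "i0 \<in> J v" using P0 P_def J_def by auto
    have vo: "v \<in> old i0" "birth v < i0" using in_old[of i0 v] P0 P_def False by auto
    show ?thesis
    proof (cases "w \<in> new i0")
      case True then show ?thesis using iJ wI by blast
    next
      case False
      then have wo: "w \<in> old i0" using P0 P_def new_un_old[of i0] by blast
      obtain a b where ab: "a \<noteq> b" "old i0 = {a,b}" "\<exists>j<i0. {a,b} \<subseteq> Hs!j"
        using old_pos[of i0] vo P0 P_def by auto
      then obtain j where j: "j < i0" "{a,b} \<subseteq> Hs!j" by blast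
      have "v \<in> Hs!j" "w \<in> Hs!j" using j ab vo wo by auto
      then have "P j" using j P0 P_def by auto
      then show ?thesis using min j by blast
    qed
  qed
qed

definition Dl :: "nat set \<Rightarrow> nat \<Rightarrow> nat" where
  "Dl I v = card (Hs!(birth v) \<inter> I) + (\<Sum>i\<in>J v. card (new i \<inter> I))"

lemma nb_le_Dl: assumes "v \<in> tverts Hs" "v \<notin> I" "finite I"
  shows "card (nb I v) \<le> Dl I v"
proof -
  have "card (nb I v) \<le> card ((Hs!(birth v) \<inter> I) \<union> (\<Union>i\<in>J v. new i \<inter> I))"
    by (rule card_mono) (use nb_cover[OF assms(1,2)] assms(3) J_fin in auto)
  also have "\<dots> \<le> card (Hs!(birth v) \<inter> I) + card (\<Union>i\<in>J v. new i \<inter> I)"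
    by (rule card_Un_le)
  also have "card (\<Union>i\<in>J v. new i \<inter> I) \<le> (\<Sum>i\<in>J v. card (new i \<inter> I))"
    by (rule card_UN_le[OF J_fin])
  finally show ?thesis unfolding Dl_def by simp
qed

definition hh :: "nat \<Rightarrow> nat set \<Rightarrow> int" where
  "hh i I = int (card (new i \<inter> I)) * (int (card (new i \<inter> I)) - 1)
      + 2 * int (card (new i \<inter> I)) * int (card (old i \<inter> I))"

lemma card_H_split: "i < L \<Longrightarrow> card (Hs!i \<inter> I) = card (new i \<inter> I) + card (old i \<inter> I)"
proof -
  assume i: "i<L"
  have "Hs!i \<inter> I = (new i \<inter> I) \<union> (old i \<inter> I)" using new_un_old[of i] by blast
  moreover have "(new i \<inter> I) \<inter> (old i \<inter> I) = {}" using new_old_disj[of i] by blast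
  ultimately show ?thesis using card_Un_disjoint fin_new[OF i] fin_old[OF i]
    by (metis finite_Int)
qed

lemma hh_step: assumes v: "v \<in> tverts Hs" "v \<notin> I" and i: "i < L"
  shows "hh i (insert v I) = hh i I +
    (if i = birth v then 2 * int (card (Hs!i \<inter> I))
     else if v \<in> Hs!i then 2 * int (card (new i \<inter> I)) else 0)"
proof -
  let ?p = "card (new i \<inter> I)" and ?q = "card (old i \<inter> I)"
  have fn: "finite (new i \<inter> I)" "finite (old i \<inter> I)" using fin_new[OF i] fin_old[OF i] by auto
  show ?thesis
  proof (cases "i = birth v")
    case True
    then have vn: "v \<in> new i" "v \<notin> old i" using birth_new[OF v(1)] new_old_disj[of i] by auto
    have "new i \<inter> insert v I = insert v (new i \<inter> I)" using vn by auto
    then have p: "card (new i \<inter> insert v I) = ?p + 1" using fn v(2) by simp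
    have q: "old i \<inter> insert v I = old i \<inter> I" using vn by auto
    show ?thesis unfolding hh_def p q using True card_H_split[OF i, of I]
      by (simp add: algebra_simps)
  next
    case False
    show ?thesis
    proof (cases "v \<in> Hs!i")
      case True
      have vo: "v \<in> old i" "v \<notin> new i" using in_old[OF i True False] new_old_disj[of i] by auto
      have "old i \<inter> insert v I = insert v (old i \<inter> I)" using vo by auto
      then have q: "card (old i \<inter> insert v I) = ?q + 1" using fn v(2) by simp
      have p: "new i \<inter> insert v I = new i \<inter> I" using vo by auto
      show ?thesis unfolding hh_def p q using True False by (simp add: algebra_simps)
    next
      case f2: False
      have "new i \<inter> insert v I = new i \<inter> I" "old i \<inter> insert v I = old i \<inter> I"
        using f2 new_sub[of i] old_sub[of i] by auto
      then show ?thesis unfolding hh_def using False f2 by simp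
    qed
  qed
qed

lemma sum_hh_step: assumes v: "v \<in> tverts Hs" "v \<notin> I"
  shows "(\<Sum>i<L. hh i (insert v I)) = (\<Sum>i<L. hh i I) + 2 * int (Dl I v)"
proof -
  define e where "e i = (if i = birth v then 2 * int (card (Hs!i \<inter> I))
     else if v \<in> Hs!i then 2 * int (card (new i \<inter> I)) else 0)" for i
  have "(\<Sum>i<L. hh i (insert v I)) = (\<Sum>i<L. hh i I + e i)"
    using hh_step[OF v] e_def by simp
  also have "\<dots> = (\<Sum>i<L. hh i I) + (\<Sum>i<L. e i)" by (simp add: sum.distrib)
  also have "(\<Sum>i<L. e i) = 2 * int (Dl I v)"
  proof -
    have b: "birth v \<in> {..<L}" using birth(1)[OF v(1)] by simp
    have "(\<Sum>i<L. e i) = e (birth v) + (\<Sum>i\<in>{..<L} - {birth v}. e i)"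
      using sum.remove[OF _ b] by simp
    also have "(\<Sum>i\<in>{..<L} - {birth v}. e i) = (\<Sum>i\<in>J v. 2 * int (card (new i \<inter> I)))"
    proof -
      have "(\<Sum>i\<in>{..<L} - {birth v}. e i) = (\<Sum>i\<in>{..<L} - {birth v}. if v \<in> Hs!i then 2 * int (card (new i \<inter> I)) else 0)"
        by (rule sum.cong) (auto simp: e_def)
      also have "\<dots> = (\<Sum>i\<in>{i \<in> {..<L} - {birth v}. v \<in> Hs!i}. 2 * int (card (new i \<inter> I)))"
        by (rule sum.inter_filter[symmetric]) simp
      also have "{i \<in> {..<L} - {birth v}. v \<in> Hs!i} = J v" unfolding J_def by auto
      finally show ?thesis .
    qed
    finally show ?thesis unfolding Dl_def e_def by (simp add: sum_distrib_left)
  qed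
  finally show ?thesis .
qed

definition FF :: "nat set \<Rightarrow> nat" where "FF I = card {i. i<L \<and> Hs!i \<subseteq> I}"
definition Ks :: "nat set \<Rightarrow> nat \<Rightarrow> nat set" where
  "Ks I v = {i. i<L \<and> v \<in> Hs!i \<and> Hs!i - {v} \<subseteq> I}"

lemma FF_step: assumes "v \<notin> I" shows "FF (insert v I) = FF I + card (Ks I v)"
proof -
  have "{i. i<L \<and> Hs!i \<subseteq> insert v I} = {i. i<L \<and> Hs!i \<subseteq> I} \<union> Ks I v"
    unfolding Ks_def by auto
  moreover have "{i. i<L \<and> Hs!i \<subseteq> I} \<inter> Ks I v = {}" unfolding Ks_def using assms by auto
  ultimately show ?thesis unfolding FF_def
    by (simp add: card_Un_disjoint Ks_def)
qed

lemma Ks_nb: assumes "k \<in> Ks I v" "v \<notin> I" shows "card (nb I v) \<ge> r - 1"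
proof -
  have k: "k<L" "v \<in> Hs!k" "Hs!k - {v} \<subseteq> I" using assms unfolding Ks_def by auto
  have "Hs!k - {v} \<subseteq> nb I v" using in_nb[OF k(1,2)] k(3) by blast
  then have "card (Hs!k - {v}) \<le> card (nb I v)" using card_mono nb_fin by blast
  moreover have "card (Hs!k - {v}) = r - 1" using H_card[OF k(1)] H_fin[OF k(1)] k(2) by simp
  ultimately show ?thesis by simp
qed

lemma Ks_Dl: assumes v: "v \<in> tverts Hs" "v \<notin> I" "finite I"
  shows "Dl I v \<ge> (r-2) * card (Ks I v)"
proof -
  let ?b = "birth v"
  have sub: "Ks I v \<subseteq> (Ks I v \<inter> J v) \<union> (Ks I v \<inter> {?b})" unfolding Ks_def J_def by auto
  have "card (Ks I v) \<le> card ((Ks I v \<inter> J v) \<union> (Ks I v \<inter> {?b}))"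
    by (rule card_mono) (use sub J_fin in auto)
  also have "\<dots> \<le> card (Ks I v \<inter> J v) + card (Ks I v \<inter> {?b})" by (rule card_Un_le)
  finally have C: "card (Ks I v) \<le> card (Ks I v \<inter> J v) + card (Ks I v \<inter> {?b})" .
  have A: "(r-2) * card (Ks I v \<inter> J v) \<le> (\<Sum>i\<in>J v. card (new i \<inter> I))"
  proof -
    have "(r-2) * card (Ks I v \<inter> J v) = (\<Sum>i\<in>Ks I v \<inter> J v. r - 2)" by simp
    also have "\<dots> = (\<Sum>i\<in>Ks I v \<inter> J v. card (new i \<inter> I))"
    proof (rule sum.cong[OF refl])
      fix i assume i: "i \<in> Ks I v \<inter> J v"
      then have i2: "i<L" "v \<in> Hs!i" "Hs!i - {v} \<subseteq> I" "i \<noteq> ?b" unfolding Ks_def J_def by auto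
      have "v \<notin> new i" using new_iff[OF v(1) i2(1)] i2(4) by simp
      then have "new i \<inter> I = new i" using i2(3) new_sub[of i] by blast
      moreover have "i \<noteq> 0" using in_old(2)[OF i2(1,2,4)] by simp
      ultimately show "r - 2 = card (new i \<inter> I)" using card_new[OF i2(1)] by simp
    qed
    also have "\<dots> \<le> (\<Sum>i\<in>J v. card (new i \<inter> I))"
      by (rule sum_mono2[OF J_fin]) auto
    finally show ?thesis .
  qed
  have B: "(r-2) * card (Ks I v \<inter> {?b}) \<le> card (Hs!?b \<inter> I)"
  proof (cases "?b \<in> Ks I v")
    case True
    then have b: "?b < L" "Hs!?b - {v} \<subseteq> I" unfolding Ks_def by auto
    have "Hs!?b - {v} \<subseteq> Hs!?b \<inter> I" using b by blast
    then have "card (Hs!?b - {v}) \<le> card (Hs!?b \<inter> I)" by (rule card_mono[rotated]) (use H_fin[OF b(1)] in auto)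
    moreover have "card (Hs!?b - {v}) = r - 1" using H_card[OF b(1)] H_fin[OF b(1)] birth(2)[OF v(1)] by simp
    moreover have "Ks I v \<inter> {?b} = {?b}" using True by auto
    ultimately show ?thesis by simp
  next
    case False then have "Ks I v \<inter> {?b} = {}" by auto
    then show ?thesis by simp
  qed
  have "(r-2) * card (Ks I v) \<le> (r-2) * card (Ks I v \<inter> J v) + (r-2) * card (Ks I v \<inter> {?b})"
    using mult_le_mono2[OF C, of "r-2"] by (simp add: add_mult_distrib2)
  then show ?thesis unfolding Dl_def using A B by linarith
qed

lemma usual_gain: assumes v: "v \<in> tverts Hs" "v \<notin> I" "finite I" and n: "card (nb I v) \<ge> r - 2"
  shows "Dl I v \<ge> r - 2 + card (Ks I v)"
proof -
  have d: "card (nb I v) \<le> Dl I v" by (rule nb_le_Dl[OF v])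
  consider "card (Ks I v) = 0" | "card (Ks I v) = 1" | "card (Ks I v) \<ge> 2" by linarith
  then show ?thesis
  proof cases
    case 1 then show ?thesis using d n by simp
  next
    case 2
    then obtain k where "k \<in> Ks I v" by (metis card_1_singletonE singletonI)
    then have "card (nb I v) \<ge> r - 1" using Ks_nb v(2) by blast
    then show ?thesis using d 2 r5 by simp
  next
    case 3
    have "Dl I v \<ge> (r-2) * card (Ks I v)" by (rule Ks_Dl[OF v])
    moreover have "(r-2) * card (Ks I v) \<ge> r - 2 + card (Ks I v)"
    proof -
      obtain c where c: "card (Ks I v) = c + 2" using 3 by (metis add.commute le_add_diff_inverse)
      have e: "(r-2) * (c+2) = (r-2)*c + (r-2)*2" by (rule add_mult_distrib2)
      have r1: "1 \<le> r - 2" using r5 by linarith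
      have g: "(r-2)*c \<ge> c" using mult_le_mono1[OF r1, of c] by simp
      show ?thesis unfolding c using e g r5 by linarith
    qed
    ultimately show ?thesis by linarith
  qed
qed

end

context krt begin

definition Pot :: "nat set \<Rightarrow> int" where
  "Pot I = 2 * int (r-2) * int (card I) - (\<Sum>i<L. hh i I) + 2 * int (FF I)"

lemma pot_gen: assumes "I \<subseteq> tverts Hs" "v \<in> tverts Hs" "v \<notin> I"
  shows "Pot (insert v I) = Pot I + 2 * int (r-2) - 2 * int (Dl I v) + 2 * int (card (Ks I v))"
proof -
  have fI: "finite I" using assms(1) fin_tverts finite_subset by blast
  have c: "card (insert v I) = card I + 1" using fI assms(3) by simp
  show ?thesis unfolding Pot_def c sum_hh_step[OF assms(2,3)] FF_step[OF assms(3)]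
    by (simp add: algebra_simps)
qed

lemma pot_usual: assumes "I \<subseteq> tverts Hs" "v \<in> tverts Hs" "v \<notin> I" "card (nb I v) \<ge> r - 2"
  shows "Pot (insert v I) \<le> Pot I"
proof -
  have fI: "finite I" using assms(1) fin_tverts finite_subset by blast
  have "Dl I v \<ge> r - 2 + card (Ks I v)" by (rule usual_gain[OF assms(2,3) fI assms(4)])
  then have "int (Dl I v) \<ge> int (r-2) + int (card (Ks I v))" by linarith
  then show ?thesis unfolding pot_gen[OF assms(1-3)] by linarith
qed

lemma no_usual: assumes "\<not> (\<exists>J. usual_step r Hs I J)" "v \<in> tverts Hs" "v \<notin> I"
  shows "card (nb I v) < r - 2"
  using assms unfolding usual_step_def nb_def by (metis not_le)

definition goodA where "goodA I k \<longleftrightarrow> (\<exists>w\<in>Hs!k. (w \<in> I \<or> card (nb I w) \<ge> r-2) \<and> card (Hs!k \<inter> I - {w}) \<ge> r-3)"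
definition goodB where "goodB I k \<longleftrightarrow> (\<exists>w\<in>Hs!k. (w \<in> I \<or> card (nb I w) \<ge> r-2) \<and> card (Hs!k \<inter> I - {w}) \<ge> 2)"

lemma good_mono_aux: assumes "k<L" "I \<subseteq> I'" "(w \<in> I \<or> card (nb I w) \<ge> r-2) \<and> card (Hs!k \<inter> I - {w}) \<ge> c"
  shows "(w \<in> I' \<or> card (nb I' w) \<ge> r-2) \<and> card (Hs!k \<inter> I' - {w}) \<ge> c"
proof -
  have "card (Hs!k \<inter> I - {w}) \<le> card (Hs!k \<inter> I' - {w})"
    by (rule card_mono) (use H_fin[OF assms(1)] assms(2) in auto)
  moreover have "card (nb I w) \<le> card (nb I' w)" by (rule nb_mono[OF assms(2)])
  ultimately show ?thesis using assms(2,3) by auto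
qed
lemma goodA_mono: "k<L \<Longrightarrow> I \<subseteq> I' \<Longrightarrow> goodA I k \<Longrightarrow> goodA I' k"
  unfolding goodA_def using good_mono_aux by blast
lemma goodB_mono: "k<L \<Longrightarrow> I \<subseteq> I' \<Longrightarrow> goodB I k \<Longrightarrow> goodB I' k"
  unfolding goodB_def using good_mono_aux by blast
lemma good_card: assumes "k<L" "card (Hs!k \<inter> I - {w}) \<ge> c" shows "card (Hs!k \<inter> I) \<ge> c"
proof -
  have "card (Hs!k \<inter> I - {w}) \<le> card (Hs!k \<inter> I)"
    by (rule card_mono) (use H_fin[OF assms(1)] in auto)
  then show ?thesis using assms(2) by linarith
qed
lemma goodA_card: "k<L \<Longrightarrow> goodA I k \<Longrightarrow> card (Hs!k \<inter> I) \<ge> r-3"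
  unfolding goodA_def using good_card by blast
lemma goodB_card: "k<L \<Longrightarrow> goodB I k \<Longrightarrow> card (Hs!k \<inter> I) \<ge> 2"
  unfolding goodB_def using good_card by blast

end

context krt begin

lemma special_facts: assumes I: "I \<subseteq> tverts Hs" and sp: "special_step r Hs I I'"
  shows "\<exists>i j w. i<L \<and> j<L \<and> i\<noteq>j \<and> card (Hs!i \<inter> I) = r-4 \<and> card (Hs!j \<inter> I) = 1 \<and>
     Pot I' \<le> Pot I + 2 \<and> I' \<subseteq> tverts Hs \<and> I \<subseteq> I' \<and> w \<in> Hs!i \<and> w \<in> Hs!j \<and>
     card (nb I' w) \<ge> r-2 \<and> card (Hs!i \<inter> I' - {w}) \<ge> r-3 \<and> card (Hs!j \<inter> I' - {w}) \<ge> 2"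
proof -
  have fI: "finite I" using I fin_tverts finite_subset by blast
  have noU: "\<not> (\<exists>J. usual_step r Hs I J)" using sp unfolding special_step_def by blast
  obtain f i j u where f: "internal_edge Hs f" "i < L" "j < L" "i \<noteq> j"
        "f \<subseteq> Hs ! i" "f \<subseteq> Hs ! j"
        "card (Hs ! i \<inter> I) = r - 4" "card (Hs ! j \<inter> I) = 1"
        "(Hs ! i \<inter> I) \<inter> f = {}" "(Hs ! j \<inter> I) \<inter> f = {}"
        "u \<in> f" "I' = insert u I"
    using sp unfolding special_step_def by blast
  obtain x y where xy: "x \<noteq> y" "f = {x,y}" using f(1) unfolding internal_edge_def by blast
  have HH: "Hs!i \<inter> Hs!j = f"
  proof -
    have "f \<subseteq> Hs!i \<inter> Hs!j" using f by blast
    moreover have "card (Hs!i \<inter> Hs!j) \<le> card f" using inter_card[OF f(2,3,4)] xy by simp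
    moreover have "finite (Hs!i \<inter> Hs!j)" using H_fin[OF f(2)] by simp
    ultimately show ?thesis by (metis card_seteq)
  qed
  define A where "A = Hs!i \<inter> I"
  define B where "B = Hs!j \<inter> I"
  have fA: "finite A" "finite B" using fI A_def B_def by auto
  have uI: "u \<notin> I" using f(5,9,11) by blast
  have ut: "u \<in> tverts Hs" using f(2,5,11) tverts_iff by blast
  have AB: "A \<inter> B = {}" using HH f(9) A_def B_def by blast
  have cAB: "card (A \<union> B) = r - 3" using card_Un_disjoint[OF fA AB] f(7,8) A_def B_def r5 by simp
  have ABnb: "A \<union> B \<subseteq> nb I u"
  proof
    fix a assume "a \<in> A \<union> B"
    then show "a \<in> nb I u"
    proof
      assume "a \<in> A" then show ?thesis using in_nb[OF f(2), of u a I] f(5,11) uI A_def by blast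
    next
      assume "a \<in> B" then show ?thesis using in_nb[OF f(3), of u a I] f(6,11) uI B_def by blast
    qed
  qed
  have nbu: "card (nb I u) \<ge> r - 3" using card_mono[OF nb_fin ABnb] cAB by simp
  have Ks0: "Ks I u = {}"
  proof (rule ccontr)
    assume "Ks I u \<noteq> {}"
    then obtain k where "k \<in> Ks I u" by blast
    then have "card (nb I u) \<ge> r - 1" using Ks_nb uI by blast
    then show False using no_usual[OF noU ut uI] by linarith
  qed
  have "Dl I u \<ge> r - 3" using nb_le_Dl[OF ut uI fI] nbu by linarith
  then have "int (Dl I u) \<ge> int (r-2) - 1" using r5 by linarith
  then have pot: "Pot I' \<le> Pot I + 2" unfolding f(12) pot_gen[OF I ut uI] Ks0 by simp
  obtain w where w: "w \<in> f" "w \<noteq> u" using xy by blast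
  have wI: "w \<notin> I'" using w f(5,9,12) by blast
  have wi: "w \<in> Hs!i" "w \<in> Hs!j" using w f(5,6) by auto
  have uAB: "u \<notin> A \<union> B" using uI A_def B_def by blast
  have c3: "card (A \<union> B \<union> {u}) = r - 2" using cAB uAB fA r5 by simp
  have "A \<union> B \<union> {u} \<subseteq> nb I' w"
  proof
    fix a assume a: "a \<in> A \<union> B \<union> {u}"
    have aI: "a \<in> I'" "a \<noteq> w" using a wI f(12) A_def B_def by auto
    show "a \<in> nb I' w"
    proof (cases "a \<in> B")
      case True then show ?thesis using in_nb[OF f(3) wi(2) _ aI] B_def by blast
    next
      case False
      then have "a \<in> Hs!i" using a A_def f(5,11) by blast
      then show ?thesis using in_nb[OF f(2) wi(1) _ aI] by blast
    qed
  qed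
  then have nbw: "card (nb I' w) \<ge> r - 2" using card_mono[OF nb_fin] c3 by metis
  have "A \<union> {u} \<subseteq> Hs!i \<inter> I' - {w}" using A_def f(5,11,12) w wI by auto
  then have ci: "card (Hs!i \<inter> I' - {w}) \<ge> r - 3"
    using card_mono[of "Hs!i \<inter> I' - {w}" "A \<union> {u}"] H_fin[OF f(2)] uAB fA f(7) A_def r5
    by (simp add: card_insert_if)
  have "B \<union> {u} \<subseteq> Hs!j \<inter> I' - {w}" using B_def f(6,11,12) w wI by auto
  then have cj: "card (Hs!j \<inter> I' - {w}) \<ge> 2"
    using card_mono[of "Hs!j \<inter> I' - {w}" "B \<union> {u}"] H_fin[OF f(3)] uAB fA f(8) B_def
    by (simp add: card_insert_if)
  have "I' \<subseteq> tverts Hs" "I \<subseteq> I'" using I ut f(12) by auto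
  then show ?thesis using f(2,3,4,7,8) pot wi nbw ci cj by blast
qed

end

context krt begin

definition inv :: "nat set \<Rightarrow> nat set \<Rightarrow> bool" where
  "inv S I \<longleftrightarrow> I \<subseteq> tverts Hs \<and> (\<exists>RA RB. RA \<subseteq> {..<L} \<and> RB \<subseteq> {..<L} \<and>
     (\<forall>k\<in>RA. goodA I k) \<and> (\<forall>k\<in>RB. goodB I k) \<and> (r = 5 \<longrightarrow> RA \<inter> RB = {}) \<and>
     Pot I \<le> Pot S + int (card RA) + int (card RB))"

lemma invI: "I \<subseteq> tverts Hs \<Longrightarrow> RA \<subseteq> {..<L} \<Longrightarrow> RB \<subseteq> {..<L} \<Longrightarrow>
     \<forall>k\<in>RA. goodA I k \<Longrightarrow> \<forall>k\<in>RB. goodB I k \<Longrightarrow> (r = 5 \<longrightarrow> RA \<inter> RB = {}) \<Longrightarrow>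
     Pot I \<le> Pot S + int (card RA) + int (card RB) \<Longrightarrow> inv S I"
  unfolding inv_def by blast

lemma inv_step: assumes "inv S I" "bp_step r Hs I I'" shows "inv S I'"
proof -
  have I: "I \<subseteq> tverts Hs" using assms(1) inv_def by blast
  obtain RA RB where R: "RA \<subseteq> {..<L}" "RB \<subseteq> {..<L}"
     "\<forall>k\<in>RA. goodA I k" "\<forall>k\<in>RB. goodB I k" "r = 5 \<longrightarrow> RA \<inter> RB = {}"
     "Pot I \<le> Pot S + int (card RA) + int (card RB)"
    using assms(1) unfolding inv_def by blast
  have fR: "finite RA" "finite RB" using R(1,2) finite_subset by blast+
  show ?thesis using assms(2) unfolding bp_step_def
  proof
    assume "usual_step r Hs I I'"
    then obtain v where v: "v \<in> tverts Hs" "v \<notin> I" "card {w. tadj Hs v w \<and> w \<in> I} \<ge> r - 2" "I' = insert v I"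
      unfolding usual_step_def by blast
    have p: "Pot I' \<le> Pot I" using pot_usual[OF I v(1,2)] v(3,4) unfolding nb_def by simp
    have sub: "I \<subseteq> I'" "I' \<subseteq> tverts Hs" using v I by auto
    have "\<forall>k\<in>RA. goodA I' k" using R(1,3) goodA_mono[OF _ sub(1)] by blast
    moreover have "\<forall>k\<in>RB. goodB I' k" using R(2,4) goodB_mono[OF _ sub(1)] by blast
    moreover have "Pot I' \<le> Pot S + int (card RA) + int (card RB)" using p R(6) by linarith
    ultimately show ?thesis using invI[OF sub(2) R(1,2)] R(5) by blast
  next
    assume "special_step r Hs I I'"
    then obtain i j w where s: "i<L" "j<L" "i\<noteq>j" "card (Hs!i \<inter> I) = r-4" "card (Hs!j \<inter> I) = 1"
     "Pot I' \<le> Pot I + 2" "I' \<subseteq> tverts Hs" "I \<subseteq> I'" "w \<in> Hs!i" "w \<in> Hs!j"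
     "card (nb I' w) \<ge> r-2" "card (Hs!i \<inter> I' - {w}) \<ge> r-3" "card (Hs!j \<inter> I' - {w}) \<ge> 2"
      using special_facts[OF I] by blast
    have iA: "i \<notin> RA"
    proof
      assume "i \<in> RA" then have "card (Hs!i \<inter> I) \<ge> r - 3" using goodA_card R(1,3) by blast
      then show False using s(4) r5 by linarith
    qed
    have jB: "j \<notin> RB"
    proof
      assume "j \<in> RB" then have "card (Hs!j \<inter> I) \<ge> 2" using goodB_card R(2,4) by blast
      then show False using s(5) by linarith
    qed
    define RA' where "RA' = insert i RA"
    define RB' where "RB' = insert j RB"
    have c: "card RA' = card RA + 1" "card RB' = card RB + 1"
      using iA jB fR RA'_def RB'_def by auto
    have gA: "\<forall>k\<in>RA'. goodA I' k"
    proof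
      fix k assume "k \<in> RA'"
      then show "goodA I' k"
      proof (cases "k = i")
        case True then show ?thesis unfolding goodA_def using s(9,11,12) by blast
      next
        case False then show ?thesis using \<open>k \<in> RA'\<close> RA'_def R(1,3) goodA_mono[OF _ s(8)] by blast
      qed
    qed
    have gB: "\<forall>k\<in>RB'. goodB I' k"
    proof
      fix k assume "k \<in> RB'"
      then show "goodB I' k"
      proof (cases "k = j")
        case True then show ?thesis unfolding goodB_def using s(10,11,13) by blast
      next
        case False then show ?thesis using \<open>k \<in> RB'\<close> RB'_def R(2,4) goodB_mono[OF _ s(8)] by blast
      qed
    qed
    have d5: "r = 5 \<longrightarrow> RA' \<inter> RB' = {}"
    proof
      assume r: "r = 5"
      have "i \<notin> RB"
      proof
        assume "i \<in> RB" then have "card (Hs!i \<inter> I) \<ge> 2" using goodB_card R(2,4) by blast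
        then show False using s(4) r by simp
      qed
      moreover have "j \<notin> RA"
      proof
        assume "j \<in> RA" then have "card (Hs!j \<inter> I) \<ge> r - 3" using goodA_card R(1,3) by blast
        then show False using s(5) r by simp
      qed
      ultimately show "RA' \<inter> RB' = {}" using R(5) r s(3) RA'_def RB'_def by auto
    qed
    have "Pot I' \<le> Pot S + int (card RA') + int (card RB')" using s(6) R(6) c by linarith
    moreover have "RA' \<subseteq> {..<L}" "RB' \<subseteq> {..<L}" using R(1,2) s(1,2) RA'_def RB'_def by auto
    ultimately show ?thesis using invI[OF s(7) _ _ gA gB d5] by blast
  qed
qed

lemma inv_run: assumes "S \<subseteq> tverts Hs" "(bp_step r Hs)\<^sup>*\<^sup>* S I" shows "inv S I"
  using assms(2)
proof (induction rule: rtranclp_induct)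
  case base
  show ?case by (rule invI[of _ "{}" "{}"]) (use assms(1) in auto)
next
  case (step y z)
  then show ?case using inv_step by blast
qed

end


lemma arith_clique:
  fixes r P Q m n oq :: int
  assumes r: "r \<ge> 5" and P: "0 \<le> P" "P \<le> n" and Q: "0 \<le> Q" "Q \<le> oq"
    and no: "(n = r \<and> oq = 0) \<or> (n = r-2 \<and> oq = 2)"
    and m: "0 \<le> m" "m \<le> 2" "r = 5 \<longrightarrow> m \<le> 1" "m \<ge> 1 \<longrightarrow> P + Q \<ge> 3"
    and tm: "P + Q \<ge> r - 2 \<longrightarrow> (P = n \<and> Q = oq)"
  shows "r * (2*(r-2)*P - (P*(P-1) + 2*P*Q) + 2*(if P = n \<and> Q = oq then 1 else 0)) \<ge> r*m + P"
proof -
  have rm: "r*m \<le> r*2" by (rule mult_left_mono) (use m r in auto)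
  show ?thesis
proof (cases "P = n \<and> Q = oq")
  case True
  note T = True
  have if1: "(if P = n \<and> Q = oq then 1 else 0) = (1::int)" using T by simp
  show ?thesis
  proof (cases "n = r")
    case True
    then have "P = r" "Q = 0" using T no by auto
    have e1: "2*(r-2)*P - (P*(P-1) + 2*P*Q) + 2 = (r-1)*(r-2)"
      unfolding \<open>P = r\<close> \<open>Q = 0\<close> by (simp add: algebra_simps)
    have e: "2*(r-2)*P - (P*(P-1) + 2*P*Q) + 2*(if P = n \<and> Q = oq then 1 else 0) = (r-1)*(r-2)"
      using e1 by (simp only: if1)
    have h: "(r-1)*(r-2) \<ge> 4*3" using r by (intro mult_mono) auto
    have "r * ((r-1)*(r-2)) \<ge> r * 12" by (rule mult_left_mono) (use h r in auto)
    then show ?thesis unfolding e using m \<open>P = r\<close> r rm by linarith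
  next
    case False
    then have nn: "n = r - 2" "oq = 2" using no by auto
    then have "P = r - 2" "Q = 2" using T by auto
    have e1: "2*(r-2)*P - (P*(P-1) + 2*P*Q) + 2 = (r-2)*(r-5) + 2"
      unfolding \<open>P = r-2\<close> \<open>Q = 2\<close> by (simp add: algebra_simps)
    have e: "2*(r-2)*P - (P*(P-1) + 2*P*Q) + 2*(if P = n \<and> Q = oq then 1 else 0) = (r-2)*(r-5) + 2"
      using e1 by (simp only: if1)
    show ?thesis
    proof (cases "r = 5")
      case True then show ?thesis unfolding e using m \<open>P = r - 2\<close> by (simp add: True)
    next
      case False
      then have h: "(r-2)*(r-5) \<ge> 4*1" using r by (intro mult_mono) auto
      have "r * ((r-2)*(r-5) + 2) \<ge> r * 6" by (rule mult_left_mono) (use h r in auto)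
      then show ?thesis unfolding e using m \<open>P = r - 2\<close> r rm by linarith
    qed
  qed
next
  case False
  then have PQ: "P + Q \<le> r - 3" using tm by linarith
  have Qo: "Q \<le> 2" using Q no by auto
  have "2*(r-2) - (P-1) - 2*Q \<ge> 3" using PQ Qo r by (simp add: algebra_simps)
  then have h: "P * (2*(r-2) - (P-1) - 2*Q) \<ge> P * 3" by (rule mult_left_mono) (use P in auto)
  have h2: "r * (P * (2*(r-2) - (P-1) - 2*Q)) \<ge> r * (P * 3)" by (rule mult_left_mono) (use h r in auto)
  have eq: "P * (2*(r-2) - (P-1) - 2*Q) = 2*(r-2)*P - (P*(P-1) + 2*P*Q)" by (simp add: algebra_simps)
  have if0: "(if P = n \<and> Q = oq then 1 else 0) = (0::int)" using False by simp
  have e3: "r*(P*3) = 3*(r*P)" by simp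
  have "r * (2*(r-2)*P - (P*(P-1) + 2*P*Q) + 2*(if P = n \<and> Q = oq then 1 else 0))
      = r * (P * (2*(r-2) - (P-1) - 2*Q))" unfolding if0 eq by simp
  then have A: "r * (2*(r-2)*P - (P*(P-1) + 2*P*Q) + 2*(if P = n \<and> Q = oq then 1 else 0)) \<ge> 3 * (r * P)"
    using h2 e3 by linarith
  show ?thesis
  proof (cases "m \<ge> 1")
    case True
    then have "P \<ge> 1" using m Qo by linarith
    then have "r * P \<ge> r * 1" by (rule mult_left_mono) (use r in auto)
    moreover have "r * P \<ge> 5 * P" by (rule mult_right_mono) (use r P in auto)
    ultimately show ?thesis using A m rm r by linarith
  next
    case False
    then have "m = 0" using m by linarith
    then have "r * m = 0" by simp
    moreover have "r * P \<ge> 5 * P" by (rule mult_right_mono) (use r P in auto)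
    ultimately show ?thesis using A P by linarith
  qed
qed
qed


context krt begin

lemma term_full: assumes I: "I \<subseteq> tverts Hs" and noU: "\<not> (\<exists>J. usual_step r Hs I J)"
  and k: "k < L" "card (Hs!k \<inter> I) \<ge> r-2" shows "Hs!k \<subseteq> I"
proof (rule ccontr)
  assume "\<not> Hs!k \<subseteq> I"
  then obtain x where x: "x \<in> Hs!k" "x \<notin> I" by blast
  have xt: "x \<in> tverts Hs" using x k(1) tverts_iff by blast
  have "Hs!k \<inter> I \<subseteq> nb I x" using in_nb[OF k(1) x(1)] x(2) by blast
  then have "card (Hs!k \<inter> I) \<le> card (nb I x)" using card_mono nb_fin by blast
  then show False using no_usual[OF noU xt x(2)] k(2) by linarith
qed

lemma term_good: assumes noU: "\<not> (\<exists>J. usual_step r Hs I J)" and k: "k < L"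
  and w: "w \<in> Hs!k" "w \<in> I \<or> card (nb I w) \<ge> r-2" "card (Hs!k \<inter> I - {w}) \<ge> 2"
  shows "card (Hs!k \<inter> I) \<ge> 3"
proof -
  have wt: "w \<in> tverts Hs" using w(1) k tverts_iff by blast
  have wI: "w \<in> I" using w(2) no_usual[OF noU wt] by force
  have "card (Hs!k \<inter> I - {w}) = card (Hs!k \<inter> I) - 1"
    by (rule card_Diff_singleton) (use w(1) wI in auto)
  then show ?thesis using w(3) by linarith
qed

definition g :: "nat \<Rightarrow> nat set \<Rightarrow> int" where
  "g i I = 2 * int (r-2) * int (card (new i \<inter> I)) - hh i I + 2 * (if Hs!i \<subseteq> I then 1 else 0)"

lemma FF_sum: "int (FF I) = (\<Sum>i<L. if Hs!i \<subseteq> I then 1 else 0)"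
proof -
  have "(\<Sum>i<L. if Hs!i \<subseteq> I then 1 else (0::int)) = (\<Sum>i\<in>{i\<in>{..<L}. Hs!i \<subseteq> I}. 1)"
    by (rule sum.inter_filter[symmetric]) simp
  also have "{i\<in>{..<L}. Hs!i \<subseteq> I} = {i. i<L \<and> Hs!i \<subseteq> I}" by auto
  finally show ?thesis unfolding FF_def by simp
qed

lemma card_sum_R: assumes "R \<subseteq> {..<L}" shows "(\<Sum>i<L. if i \<in> R then 1 else 0) = int (card R)"
proof -
  have "(\<Sum>i<L. if i \<in> R then 1 else (0::int)) = (\<Sum>i\<in>{i\<in>{..<L}. i \<in> R}. 1)"
    by (rule sum.inter_filter[symmetric]) simp
  also have "{i\<in>{..<L}. i \<in> R} = R" using assms by auto
  finally show ?thesis by simp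
qed

lemma Pot_sum: assumes "I \<subseteq> tverts Hs" shows "Pot I = (\<Sum>i<L. g i I)"
proof -
  have "(\<Sum>i<L. g i I) = 2 * int (r-2) * (\<Sum>i<L. int (card (new i \<inter> I))) - (\<Sum>i<L. hh i I)
       + 2 * (\<Sum>i<L. if Hs!i \<subseteq> I then 1 else 0)"
    unfolding g_def by (simp add: sum.distrib sum_subtractf sum_distrib_left)
  also have "(\<Sum>i<L. int (card (new i \<inter> I))) = int (card I)"
    using card_sum[OF assms] by simp
  finally show ?thesis unfolding Pot_def FF_sum by simp
qed

lemma full_iff: assumes "i < L"
  shows "Hs!i \<subseteq> I \<longleftrightarrow> (card (new i \<inter> I) = card (new i) \<and> card (old i \<inter> I) = card (old i))"
proof
  assume "Hs!i \<subseteq> I"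
  then have "new i \<inter> I = new i" "old i \<inter> I = old i" using new_sub old_sub by blast+
  then show "card (new i \<inter> I) = card (new i) \<and> card (old i \<inter> I) = card (old i)" by simp
next
  assume a: "card (new i \<inter> I) = card (new i) \<and> card (old i \<inter> I) = card (old i)"
  have "new i \<inter> I = new i" using card_subset_eq[OF fin_new[OF assms], of "new i \<inter> I"] a by blast
  moreover have "old i \<inter> I = old i" using card_subset_eq[OF fin_old[OF assms], of "old i \<inter> I"] a by blast
  ultimately show "Hs!i \<subseteq> I" using new_un_old[of i] by blast
qed

lemma clique_bound: assumes I: "I \<subseteq> tverts Hs" and noU: "\<not> (\<exists>J. usual_step r Hs I J)"
  and i: "i < L"
  and RA: "i \<in> RA \<Longrightarrow> goodA I i" and RB: "i \<in> RB \<Longrightarrow> goodB I i"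
  and d: "r = 5 \<longrightarrow> RA \<inter> RB = {}"
  shows "int r * g i I \<ge> int r * ((if i \<in> RA then 1 else 0) + (if i \<in> RB then 1 else 0)) + int (card (new i \<inter> I))"
proof -
  define P where "P = card (new i \<inter> I)"
  define Q where "Q = card (old i \<inter> I)"
  define m :: int where "m = (if i \<in> RA then 1 else 0) + (if i \<in> RB then 1 else 0)"
  have PQ: "card (Hs!i \<inter> I) = P + Q" using card_H_split[OF i] P_def Q_def by simp
  have Pn: "P \<le> card (new i)" unfolding P_def by (rule card_mono[OF fin_new[OF i]]) auto
  have Qo: "Q \<le> card (old i)" unfolding Q_def by (rule card_mono[OF fin_old[OF i]]) auto
  have no: "(int (card (new i)) = int r \<and> int (card (old i)) = 0) \<or>
            (int (card (new i)) = int r - 2 \<and> int (card (old i)) = 2)"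
    using card_new[OF i] card_old[OF i] r5 by auto
  have m3: "m \<ge> 1 \<longrightarrow> int P + int Q \<ge> 3"
  proof
    assume "m \<ge> 1"
    then have "i \<in> RA \<or> i \<in> RB" unfolding m_def by (auto split: if_splits)
    then have "card (Hs!i \<inter> I) \<ge> 3"
    proof
      assume "i \<in> RA"
      then obtain w where "w \<in> Hs!i" "w \<in> I \<or> card (nb I w) \<ge> r-2" "card (Hs!i \<inter> I - {w}) \<ge> r-3"
        using RA unfolding goodA_def by blast
      moreover have "card (Hs!i \<inter> I - {w}) \<ge> 2" using calculation(3) r5 by linarith
      ultimately show ?thesis using term_good[OF noU i] by blast
    next
      assume "i \<in> RB"
      then obtain w where "w \<in> Hs!i" "w \<in> I \<or> card (nb I w) \<ge> r-2" "card (Hs!i \<inter> I - {w}) \<ge> 2"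
        using RB unfolding goodB_def by blast
      then show ?thesis using term_good[OF noU i] by blast
    qed
    then show "int P + int Q \<ge> 3" using PQ by linarith
  qed
  have m5: "int r = 5 \<longrightarrow> m \<le> 1" using d unfolding m_def by auto
  have tm: "int P + int Q \<ge> int r - 2 \<longrightarrow> (int P = int (card (new i)) \<and> int Q = int (card (old i)))"
  proof
    assume "int P + int Q \<ge> int r - 2"
    then have "card (Hs!i \<inter> I) \<ge> r - 2" using PQ by linarith
    then have "Hs!i \<subseteq> I" by (rule term_full[OF I noU i])
    then show "int P = int (card (new i)) \<and> int Q = int (card (old i))" using full_iff[OF i] P_def Q_def by simp
  qed
  have A: "int r * (2*(int r-2)*int P - (int P*(int P-1) + 2*int P*int Q) +
       2*(if int P = int (card (new i)) \<and> int Q = int (card (old i)) then 1 else 0)) \<ge> int r * m + int P"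
    by (rule arith_clique) (use r5 Pn Qo no m3 m5 tm m_def in auto)
  have gi: "g i I = 2*(int r-2)*int P - (int P*(int P-1) + 2*int P*int Q) +
       2*(if int P = int (card (new i)) \<and> int Q = int (card (old i)) then 1 else 0)"
    unfolding g_def hh_def P_def[symmetric] Q_def[symmetric] using full_iff[OF i] P_def Q_def r5
    by (simp add: of_nat_diff)
  show ?thesis using A unfolding gi m_def P_def by simp
qed

end

context krt begin

lemma hh_nonneg: "hh i I \<ge> 0"
proof -
  have "int (card (new i \<inter> I)) * (int (card (new i \<inter> I)) - 1) \<ge> 0"
    by (cases "card (new i \<inter> I) = 0") auto
  then show ?thesis unfolding hh_def by simp
qed

lemma FF_le: assumes "S \<subseteq> tverts Hs" shows "int (FF S) \<le> int (card S)"
proof -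
  have "(\<Sum>i<L. if Hs!i \<subseteq> S then 1 else 0) \<le> (\<Sum>i<L. int (card (new i \<inter> S)))"
  proof (rule sum_mono)
    fix i assume i: "i \<in> {..<L}"
    show "(if Hs!i \<subseteq> S then 1 else 0) \<le> int (card (new i \<inter> S))"
    proof (cases "Hs!i \<subseteq> S")
      case True
      then have "new i \<inter> S = new i" using new_sub by blast
      moreover have "card (new i) \<ge> 1" using card_new[of i] i r5 by auto
      ultimately show ?thesis using True by simp
    qed simp
  qed
  then show ?thesis unfolding FF_sum card_sum[OF assms] by simp
qed

lemma Pot_S: assumes "S \<subseteq> tverts Hs" shows "Pot S \<le> 2 * int (r-2) * int (card S) + 2 * int (card S)"
proof -
  have "(\<Sum>i<L. hh i S) \<ge> 0" using hh_nonneg by (simp add: sum_nonneg)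
  then show ?thesis unfolding Pot_def using FF_le[OF assms] by linarith
qed

lemma main_bound: assumes S: "S \<subseteq> tverts Hs" and run: "bp_run_result r Hs S I"
  shows "int (card I) \<le> 2 * int r * (int r - 1) * int (card S)"
proof -
  have rt: "(bp_step r Hs)\<^sup>*\<^sup>* S I" and tm: "\<not> (\<exists>I'. bp_step r Hs I I')"
    using run unfolding bp_run_result_def by auto
  have noU: "\<not> (\<exists>J. usual_step r Hs I J)" using tm unfolding bp_step_def by blast
  have iv: "inv S I" by (rule inv_run[OF S rt])
  then have I: "I \<subseteq> tverts Hs" unfolding inv_def by blast
  obtain RA RB where R: "RA \<subseteq> {..<L}" "RB \<subseteq> {..<L}"
     "\<forall>k\<in>RA. goodA I k" "\<forall>k\<in>RB. goodB I k" "r = 5 \<longrightarrow> RA \<inter> RB = {}"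
     "Pot I \<le> Pot S + int (card RA) + int (card RB)"
    using iv unfolding inv_def by blast
  have "(\<Sum>i<L. int r * ((if i \<in> RA then 1 else 0) + (if i \<in> RB then 1 else 0)) + int (card (new i \<inter> I)))
       \<le> (\<Sum>i<L. int r * g i I)"
    by (rule sum_mono) (use clique_bound[OF I noU _ _ _ R(5)] R(3,4) in auto)
  also have "(\<Sum>i<L. int r * g i I) = int r * Pot I" unfolding Pot_sum[OF I] by (simp add: sum_distrib_left)
  also have "(\<Sum>i<L. int r * ((if i \<in> RA then 1 else 0) + (if i \<in> RB then 1 else 0)) + int (card (new i \<inter> I)))
       = int r * (int (card RA) + int (card RB)) + int (card I)"
  proof -
    have "(\<Sum>i<L. int r * ((if i \<in> RA then 1 else 0) + (if i \<in> RB then 1 else 0)) + int (card (new i \<inter> I)))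
      = int r * ((\<Sum>i<L. if i \<in> RA then 1 else 0) + (\<Sum>i<L. if i \<in> RB then 1 else 0)) + (\<Sum>i<L. int (card (new i \<inter> I)))"
      by (simp only: sum.distrib flip: sum_distrib_left)
    also have "\<dots> = int r * (int (card RA) + int (card RB)) + int (card I)"
      unfolding card_sum_R[OF R(1)] card_sum_R[OF R(2)] card_sum[OF I] by simp
    finally show ?thesis .
  qed
  finally have A: "int r * (int (card RA) + int (card RB)) + int (card I) \<le> int r * Pot I" .
  have "int r * Pot I \<le> int r * (Pot S + int (card RA) + int (card RB))"
    by (rule mult_left_mono) (use R(6) in auto)
  then have B: "int (card I) \<le> int r * Pot S" using A by (simp add: algebra_simps)
  have "int r * Pot S \<le> int r * (2 * int (r-2) * int (card S) + 2 * int (card S))"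
    by (rule mult_left_mono) (use Pot_S[OF S] in auto)
  also have "\<dots> = 2 * int r * (int r - 1) * int (card S)" using r5 by (simp add: of_nat_diff algebra_simps)
  finally show ?thesis using B by linarith
qed

end

theorem lemma6p5:
  fixes r :: nat
  assumes "r \<ge> 5"
  shows "\<exists>C::real. \<forall>Hs S I. Kr_tree r Hs \<longrightarrow> S \<subseteq> tverts Hs \<longrightarrow>
           bp_run_result r Hs S I \<longrightarrow> real (card I) \<le> C * real (card S)"
proof (intro exI allI impI)
  fix Hs S I
  assume kt: "Kr_tree r Hs" and S: "S \<subseteq> tverts Hs" and run: "bp_run_result r Hs S I"
  interpret krt r Hs using kt assms by unfold_locales
  have "int (card I) \<le> 2 * int r * (int r - 1) * int (card S)" by (rule main_bound[OF S run])
  then have "real_of_int (int (card I)) \<le> real_of_int (2 * int r * (int r - 1) * int (card S))"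
    by (simp only: of_int_le_iff)
  then show "real (card I) \<le> (2 * real r * (real r - 1)) * real (card S)" by simp
qed


end
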